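(* Let $\psi$ be an injective map from the positive integers to the positive integers and let $A=\{\psi(n): n\ge 1\}$. Let $\alpha$ be a positive integer. For every nonnegative integer $n$, \[ p^{A}(n)=\sum_{(N_0,N_1,N_2,\dots)}\ \prod_{j\ge 0} p^{A}_{\alpha}(N_j), \] where the sum runs over all sequences $(N_0,N_1,N_2,\dots)$ of nonnegative integers satisfying $n=\sum_{i\ge 0}(\alpha+1)^{i}N_i$.
   Context: For a set $A$ of positive integers and a positive integer $\alpha$, $p^{A}_{\alpha}(n)$ denotes the number of partitions of $n$ into parts from $A$ in which each part occurs at most $\alpha$ times, and $p^{A}(n)$ denotes the number of partitions of $n$ into parts from $A$ with no restriction on multiplicities. By convention $p^{A}_{\alpha}(0)=p^{A}(0)=1$, so the product on the right is effectively finite. *)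

theory Defs
  imports Main "HOL-Library.Multiset"
begin

definition partA :: "nat set \<Rightarrow> nat \<Rightarrow> nat" where
  "partA A n = card {M :: nat multiset. set_mset M \<subseteq> A \<and> sum_mset M = n}"

definition partA_bounded :: "nat set \<Rightarrow> nat \<Rightarrow> nat \<Rightarrow> nat" where
  "partA_bounded A \<alpha> n = card {M :: nat multiset. set_mset M \<subseteq> A \<and> sum_mset M = n
                                  \<and> (\<forall>k. count M k \<le> \<alpha>)}"

text \<open>Sequences (N_0, N_1, ...) of nonnegative integers with n = sum (alpha+1)^i N_i
  (necessarily finitely supported).\<close>

definition base_seqs :: "nat \<Rightarrow> nat \<Rightarrow> (nat \<Rightarrow> nat) set" where
  "base_seqs \<alpha> n = {N. finite {i. N i \<noteq> 0} \<and>
                        (\<Sum>i\<in>{i. N i \<noteq> 0}. (\<alpha> + 1) ^ i * N i) = n}"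

end

theory Submission
  imports Defs
begin

lemma sum_rep: "sum_mset (repeat_mset q (Y::nat multiset)) = q * sum_mset Y"
  by (induction Y) (auto simp: algebra_simps)

lemma mem_le: "x \<in># (M::nat multiset) \<Longrightarrow> x \<le> sum_mset M"
  by (simp add: sum_mset.remove)

lemma size_le: "0 \<notin># (M::nat multiset) \<Longrightarrow> size M \<le> sum_mset M"
proof (induction M)
  case (add x M) then show ?case by (cases x) auto
qed auto

definition SA :: "nat set \<Rightarrow> nat \<Rightarrow> nat multiset set" where
  "SA A n = {M. set_mset M \<subseteq> A \<and> sum_mset M = n}"

definition SB :: "nat set \<Rightarrow> nat \<Rightarrow> nat \<Rightarrow> nat multiset set" where
  "SB A \<alpha> n = {M. set_mset M \<subseteq> A \<and> sum_mset M = n \<and> (\<forall>k. count M k \<le> \<alpha>)}"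

lemma finite_SA: assumes "0 \<notin> A" shows "finite (SA A n)"
proof -
  have "SA A n \<subseteq> mset ` {xs. set xs \<subseteq> {..n} \<and> length xs \<le> n}"
  proof
    fix M assume M: "M \<in> SA A n"
    obtain xs where xs: "mset xs = M" using ex_mset by blast
    have sx: "set xs \<subseteq> {..n}"
    proof
      fix x assume "x \<in> set xs"
      hence "x \<in># M" using xs by auto
      hence "x \<le> sum_mset M" by (rule mem_le)
      thus "x \<in> {..n}" using M unfolding SA_def by simp
    qed
    have "0 \<notin># M" using M assms unfolding SA_def by auto
    hence "size M \<le> n" using size_le[of M] M unfolding SA_def by auto
    hence lx: "length xs \<le> n" using xs by auto
    show "M \<in> mset ` {xs. set xs \<subseteq> {..n} \<and> length xs \<le> n}"
      by (rule image_eqI[of _ _ xs]) (use xs sx lx in auto)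
  qed
  moreover have "finite {xs. set xs \<subseteq> {..n} \<and> length xs \<le> (n::nat)}"
    by (rule finite_lists_length_le) simp
  hence "finite (mset ` {xs. set xs \<subseteq> {..n} \<and> length xs \<le> (n::nat)})"
    by (rule finite_imageI)
  ultimately show ?thesis by (rule finite_subset)
qed

lemma SB_sub: "SB A \<alpha> n \<subseteq> SA A n" unfolding SB_def SA_def by auto

lemma SA_0: assumes "0 \<notin> A" shows "SA A 0 = {{#}}"
  using assms unfolding SA_def by (auto simp: sum_mset_0_iff) (metis multiset_nonemptyE subset_iff)

lemma SB_0: assumes "0 \<notin> A" shows "SB A \<alpha> 0 = {{#}}"
  using assms unfolding SB_def by (auto simp: sum_mset_0_iff) (metis multiset_nonemptyE subset_iff)

lemma divmod_uniq:
  fixes x x' y y' q :: nat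
  assumes "x < q" "x' < q" "x + q*y = x' + q*y'"
  shows "x = x' \<and> y = y'"
proof -
  have 1: "(x + q*y) mod q = x" using assms(1) by simp
  have 2: "(x' + q*y') mod q = x'" using assms(2) by simp
  have e: "x = x'" using 1 2 assms(3) by metis
  have "q > 0" using assms(1) by simp
  then have "y = y'" using e assms(3) by simp
  then show ?thesis using e by simp
qed

lemma cnz: "count M a \<noteq> 0 \<Longrightarrow> a \<in># M"
  by (metis count_greater_zero_iff gr0I)

lemma cnz2: "count M a mod q > 0 \<Longrightarrow> count M a \<noteq> 0"
  by (metis mod_0 less_irrefl)

lemma cnz3: "count M a div q > 0 \<Longrightarrow> count M a \<noteq> 0"
  by (metis div_0 less_irrefl)

lemma recF:
  assumes A0: "0 \<notin> A" and q: "q = Suc \<alpha>"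
  shows "card (SA A n) = (\<Sum>k\<in>{k. k \<le> n \<and> q dvd (n - k)}.
           card (SB A \<alpha> k) * card (SA A ((n - k) div q)))"
proof -
  define K where "K = {k. k \<le> n \<and> q dvd (n - k)}"
  define S where "S = (SIGMA k:K. SB A \<alpha> k \<times> SA A ((n - k) div q))"
  define J where "J = (\<lambda>(k::nat, X::nat multiset, Y). X + repeat_mset q Y)"
  have finK: "finite K" unfolding K_def by (rule finite_subset[of _ "{..n}"]) auto
  have inj: "inj_on J S"
  proof (rule inj_onI)
    fix u v assume u: "u \<in> S" and v: "v \<in> S" and e: "J u = J v"
    obtain k X Y where uu: "u = (k, X, Y)" by (cases u) auto
    obtain k' X' Y' where vv: "v = (k', X', Y')" by (cases v) auto
    have bX: "\<forall>a. count X a \<le> \<alpha>" "\<forall>a. count X' a \<le> \<alpha>"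
      using u v uu vv unfolding S_def SB_def by auto
    have "\<forall>a. count X a = count X' a \<and> count Y a = count Y' a"
    proof
      fix a
      have "count (J u) a = count (J v) a" using e by simp
      hence eq: "count X a + q * count Y a = count X' a + q * count Y' a"
        using uu vv unfolding J_def by simp
      have l1: "count X a < q" using bX(1) q by (simp add: le_imp_less_Suc)
      have l2: "count X' a < q" using bX(2) q by (simp add: le_imp_less_Suc)
      show "count X a = count X' a \<and> count Y a = count Y' a"
        using divmod_uniq[OF l1 l2 eq] .
    qed
    hence "X = X'" "Y = Y'" by (auto intro: multiset_eqI)
    moreover have "k = sum_mset X" "k' = sum_mset X'"
      using u v uu vv unfolding S_def SB_def by auto
    ultimately show "u = v" using uu vv by simp
  qed
  have img: "J ` S = SA A n"
  proof
    show "J ` S \<subseteq> SA A n"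
    proof
      fix M assume "M \<in> J ` S"
      then obtain k X Y where kXY: "(k, X, Y) \<in> S" and M: "M = X + repeat_mset q Y"
        unfolding J_def by auto
      have k: "k \<le> n" "q dvd (n - k)" using kXY unfolding S_def K_def by auto
      have X: "set_mset X \<subseteq> A" "sum_mset X = k" using kXY unfolding S_def SB_def by auto
      have Y: "set_mset Y \<subseteq> A" "sum_mset Y = (n - k) div q" using kXY unfolding S_def SA_def by auto
      have "\<forall>x. x \<in># repeat_mset q Y \<longrightarrow> x \<in># Y"
        by (metis count_greater_zero_iff count_repeat_mset gr0I mult_0_right)
      hence "set_mset M \<subseteq> A" using X Y M by auto
      moreover have "sum_mset M = n" using M X Y k by (simp add: sum_rep)
      ultimately show "M \<in> SA A n" unfolding SA_def by auto
    qed
  next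
    show "SA A n \<subseteq> J ` S"
    proof
      fix M assume M: "M \<in> SA A n"
      define X where "X = Abs_multiset (\<lambda>a. count M a mod q)"
      define Y where "Y = Abs_multiset (\<lambda>a. count M a div q)"
      have "{a. count M a mod q > 0} \<subseteq> set_mset M"
      proof (rule subsetI)
        fix a assume "a \<in> {a. count M a mod q > 0}"
        then have "count M a mod q > 0" by simp
        then show "a \<in># M" by (rule cnz[OF cnz2])
      qed
      hence f1: "finite {a. count M a mod q > 0}" by (rule finite_subset) simp
      have "{a. count M a div q > 0} \<subseteq> set_mset M"
      proof (rule subsetI)
        fix a assume "a \<in> {a. count M a div q > 0}"
        then have "count M a div q > 0" by simp
        then show "a \<in># M" by (rule cnz[OF cnz3])
      qed
      hence f2: "finite {a. count M a div q > 0}" by (rule finite_subset) simp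
      have cX: "count X = (\<lambda>a. count M a mod q)" unfolding X_def using f1 by (rule count_Abs_multiset)
      have cY: "count Y = (\<lambda>a. count M a div q)" unfolding Y_def using f2 by (rule count_Abs_multiset)
      have MXY: "M = X + repeat_mset q Y"
        by (rule multiset_eqI) (simp add: cX cY)
      have sX: "set_mset X \<subseteq> set_mset M"
      proof
        fix a assume "a \<in># X"
        hence "count X a > 0" by simp
        hence "count M a mod q > 0" using cX by simp
        thus "a \<in># M" by (rule cnz[OF cnz2])
      qed
      have sY: "set_mset Y \<subseteq> set_mset M"
      proof
        fix a assume "a \<in># Y"
        hence "count Y a > 0" by simp
        hence "count M a div q > 0" using cY by simp
        thus "a \<in># M" by (rule cnz[OF cnz3])
      qed
      have bX: "\<forall>a. count X a \<le> \<alpha>" using cX q by (simp add: less_Suc_eq_le[symmetric])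
      have sm: "sum_mset M = sum_mset X + q * sum_mset Y" using MXY by (simp add: sum_rep)
      have Mn: "sum_mset M = n" "set_mset M \<subseteq> A" using M unfolding SA_def by auto
      have q0: "q > 0" using q by simp
      have kin: "sum_mset X \<in> K" using sm Mn unfolding K_def by auto
      have dv: "(n - sum_mset X) div q = sum_mset Y" using sm Mn q0 by simp
      have "(sum_mset X, X, Y) \<in> S"
        unfolding S_def using kin dv sX sY Mn bX unfolding SB_def SA_def by auto
      moreover have "J (sum_mset X, X, Y) = M" unfolding J_def using MXY by simp
      ultimately show "M \<in> J ` S" by (metis image_eqI)
    qed
  qed
  have "card (SA A n) = card S" using img inj card_image by fastforce
  also have "\<dots> = (\<Sum>k\<in>K. card (SB A \<alpha> k \<times> SA A ((n - k) div q)))"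
    unfolding S_def
    by (rule card_SigmaI[OF finK]) (auto intro: finite_SA[OF A0] finite_subset[OF SB_sub])
  also have "\<dots> = (\<Sum>k\<in>K. card (SB A \<alpha> k) * card (SA A ((n - k) div q)))"
    by (simp add: card_cartesian_product)
  finally show ?thesis unfolding K_def .
qed

lemma supp_sum:
  assumes "{i. (N::nat\<Rightarrow>nat) i \<noteq> 0} \<subseteq> {..<K}"
  shows "(\<Sum>i\<in>{i. N i \<noteq> 0}. c i * N i) = (\<Sum>i<K. (c i::nat) * N i)"
  by (rule sum.mono_neutral_left) (use assms in auto)

lemma supp_prod:
  assumes "{i. (N::nat\<Rightarrow>nat) i \<noteq> 0} \<subseteq> {..<K}" and "P 0 = (1::nat)"
  shows "(\<Prod>i\<in>{i. N i \<noteq> 0}. P (N i)) = (\<Prod>i<K. P (N i))"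
  by (rule prod.mono_neutral_left) (use assms in auto)

lemma supp_bound:
  assumes "finite {i. (N::nat\<Rightarrow>nat) i \<noteq> 0}"
  shows "\<exists>K. {i. N i \<noteq> 0} \<subseteq> {..<K}"
  using assms finite_nat_set_iff_bounded by auto

lemma shift_sum: "(\<Sum>i<Suc K. q^i * N i) = N 0 + q * (\<Sum>i<K. q^i * N (Suc i::nat)::nat)"
  unfolding sum.lessThan_Suc_shift by (simp add: sum_distrib_left mult.assoc)

lemma finite_BS:
  assumes "\<alpha> \<ge> 1"
  shows "finite (base_seqs \<alpha> m)"
proof -
  have "base_seqs \<alpha> m \<subseteq> {N. \<forall>x. (x \<in> {..<m} \<longrightarrow> N x \<in> {..m}) \<and> (x \<notin> {..<m} \<longrightarrow> N x = 0)}"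
  proof
    fix N assume N: "N \<in> base_seqs \<alpha> m"
    have fin: "finite {i. N i \<noteq> 0}" and s: "(\<Sum>i\<in>{i. N i \<noteq> 0}. (\<alpha> + 1) ^ i * N i) = m"
      using N unfolding base_seqs_def by auto
    have le: "(\<alpha> + 1) ^ i * N i \<le> m" if "N i \<noteq> 0" for i
      using member_le_sum[of i "{i. N i \<noteq> 0}" "\<lambda>i. (\<alpha> + 1) ^ i * N i"] fin s that by auto
    have "N x \<le> m \<and> (x \<ge> m \<longrightarrow> N x = 0)" for x
    proof (cases "N x = 0")
      case False
      have "(1::nat) \<le> (\<alpha>+1)^x" by simp
      hence a: "N x \<le> m" using le[OF False]
        by (metis dual_order.trans mult_le_mono1 mult_1)
      have "x < 2^x" by (rule less_exp)
      also have "(2::nat)^x \<le> (\<alpha>+1)^x" using assms by (intro power_mono) auto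
      also have "\<dots> \<le> (\<alpha>+1)^x * N x" using False by simp
      also have "\<dots> \<le> m" using le[OF False] .
      finally show ?thesis using a by simp
    qed simp
    thus "N \<in> {N. \<forall>x. (x \<in> {..<m} \<longrightarrow> N x \<in> {..m}) \<and> (x \<notin> {..<m} \<longrightarrow> N x = 0)}"
      by auto
  qed
  moreover have "finite {N. \<forall>x. (x \<in> {..<m} \<longrightarrow> N x \<in> {..m}) \<and> (x \<notin> {..<m} \<longrightarrow> N x = (0::nat))}"
    by (rule finite_set_of_finite_funs) auto
  ultimately show ?thesis by (rule finite_subset)
qed

lemma recG:
  assumes P0: "P 0 = (1::nat)" and q: "q = Suc \<alpha>" and a1: "\<alpha> \<ge> 1"
  shows "(\<Sum>N\<in>base_seqs \<alpha> n. \<Prod>j\<in>{j. N j \<noteq> 0}. P (N j)) =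
    (\<Sum>k\<in>{k. k \<le> n \<and> q dvd (n - k)}. P k *
       (\<Sum>N\<in>base_seqs \<alpha> ((n - k) div q). \<Prod>j\<in>{j. N j \<noteq> 0}. P (N j)))"
proof -
  define K where "K = {k. k \<le> n \<and> q dvd (n - k)}"
  define S where "S = (SIGMA k:K. base_seqs \<alpha> ((n - k) div q))"
  define J where "J = (\<lambda>(k::nat, N'::nat\<Rightarrow>nat). case_nat k N')"
  define W where "W = (\<lambda>N::nat\<Rightarrow>nat. \<Prod>j\<in>{j. N j \<noteq> 0}. P (N j))"
  have finK: "finite K" unfolding K_def by (rule finite_subset[of _ "{..n}"]) auto
  have q1: "\<alpha> + 1 = q" using q by simp
  have inj: "inj_on J S"
  proof (rule inj_onI)
    fix u v assume "u \<in> S" "v \<in> S" and e: "J u = J v"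
    obtain k N where uu: "u = (k, N)" by (cases u) auto
    obtain k' N' where vv: "v = (k', N')" by (cases v) auto
    have e2: "case_nat k N = case_nat k' N'" using e uu vv unfolding J_def by simp
    have "k = k'" using fun_cong[OF e2, of 0] by simp
    moreover have "N = N'" using e2 by (auto intro!: ext dest: fun_cong[where x = "Suc _"])
    ultimately show "u = v" using uu vv by simp
  qed
  have W_shift: "W (case_nat k N) = P k * W N" if fin0: "finite {i. N i \<noteq> 0}" for k N
  proof -
    obtain K0 where K0: "{i. N i \<noteq> 0} \<subseteq> {..<K0}" using supp_bound[OF fin0] by blast
    have K1: "{i. case_nat k N i \<noteq> 0} \<subseteq> {..<Suc K0}"
    proof
      fix i assume "i \<in> {i. case_nat k N i \<noteq> 0}"
      then show "i \<in> {..<Suc K0}" using K0 by (cases i) auto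
    qed
    have "W (case_nat k N) = (\<Prod>i<Suc K0. P (case_nat k N i))"
      unfolding W_def by (rule supp_prod[where N="case_nat k N" and P=P, OF K1 P0])
    also have "\<dots> = P k * (\<Prod>i<K0. P (N i))" unfolding prod.lessThan_Suc_shift by simp
    also have "\<dots> = P k * W N" unfolding W_def by (subst supp_prod[where N=N and P=P, OF K0 P0]) (rule refl)
    finally show ?thesis .
  qed
  have img: "J ` S = base_seqs \<alpha> n"
  proof
    show "J ` S \<subseteq> base_seqs \<alpha> n"
    proof
      fix M assume "M \<in> J ` S"
      then obtain k N where kN: "(k, N) \<in> S" and M: "M = case_nat k N"
        unfolding J_def by auto
      have k: "k \<le> n" "q dvd (n - k)" using kN unfolding S_def K_def by auto
      have fin: "finite {i. N i \<noteq> 0}" and s: "(\<Sum>i\<in>{i. N i \<noteq> 0}. q ^ i * N i) = (n - k) div q"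
        using kN q1 unfolding S_def base_seqs_def by auto
      obtain K0 where K0: "{i. N i \<noteq> 0} \<subseteq> {..<K0}" using supp_bound[OF fin] by blast
      have K1: "{i. M i \<noteq> 0} \<subseteq> {..<Suc K0}"
      proof
        fix i assume "i \<in> {i. M i \<noteq> 0}"
        then show "i \<in> {..<Suc K0}" using K0 M by (cases i) auto
      qed
      have "(\<Sum>i\<in>{i. M i \<noteq> 0}. q ^ i * M i) = (\<Sum>i<Suc K0. q ^ i * M i)"
        by (rule supp_sum[OF K1])
      also have "\<dots> = k + q * (\<Sum>i<K0. q ^ i * N i)" unfolding M shift_sum by simp
      also have "\<dots> = k + q * ((n - k) div q)" using s supp_sum[OF K0] by simp
      also have "\<dots> = n" using k by simp
      finally have "(\<Sum>i\<in>{i. M i \<noteq> 0}. (\<alpha>+1) ^ i * M i) = n" using q1 by simp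
      moreover have "finite {i. M i \<noteq> 0}" using K1 finite_subset by blast
      ultimately show "M \<in> base_seqs \<alpha> n" unfolding base_seqs_def by auto
    qed
  next
    show "base_seqs \<alpha> n \<subseteq> J ` S"
    proof
      fix M assume M: "M \<in> base_seqs \<alpha> n"
      have fin: "finite {i. M i \<noteq> 0}" and s: "(\<Sum>i\<in>{i. M i \<noteq> 0}. q ^ i * M i) = n"
        using M q1 unfolding base_seqs_def by auto
      define N where "N = (\<lambda>i. M (Suc i))"
      have MN: "M = case_nat (M 0) N" unfolding N_def by (rule ext) (simp split: nat.splits)
      obtain K0 where K00: "{i. M i \<noteq> 0} \<subseteq> {..<K0}"
        using supp_bound[OF fin] by blast
      hence K0: "{i. M i \<noteq> 0} \<subseteq> {..<Suc K0}" by auto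
      have KN: "{i. N i \<noteq> 0} \<subseteq> {..<K0}" using K0 unfolding N_def by auto
      have finN: "finite {i. N i \<noteq> 0}" using KN finite_subset by blast
      have "n = (\<Sum>i<Suc K0. q ^ i * M i)" using s supp_sum[OF K0] by simp
      also have "\<dots> = M 0 + q * (\<Sum>i<K0. q ^ i * N i)" unfolding N_def by (rule shift_sum)
      finally have n: "n = M 0 + q * (\<Sum>i\<in>{i. N i \<noteq> 0}. q ^ i * N i)"
        using supp_sum[OF KN] by simp
      have q0: "q > 0" using q by simp
      have kin: "M 0 \<in> K" unfolding K_def using n by auto
      have "(n - M 0) div q = (\<Sum>i\<in>{i. N i \<noteq> 0}. q ^ i * N i)" using n q0 by simp
      hence "N \<in> base_seqs \<alpha> ((n - M 0) div q)" unfolding base_seqs_def using finN q1 by simp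
      hence "(M 0, N) \<in> S" unfolding S_def using kin by simp
      moreover have "J (M 0, N) = M" unfolding J_def using MN by simp
      ultimately show "M \<in> J ` S" by (metis image_eqI)
    qed
  qed
  have finS: "\<forall>k\<in>K. finite (base_seqs \<alpha> ((n - k) div q))" using finite_BS[OF a1] by blast
  have "(\<Sum>N\<in>base_seqs \<alpha> n. W N) = (\<Sum>u\<in>S. W (J u))"
    using sum.reindex[OF inj, of W] img by simp
  also have "\<dots> = (\<Sum>k\<in>K. \<Sum>N\<in>base_seqs \<alpha> ((n - k) div q). W (J (k, N)))"
    unfolding S_def by (subst sum.Sigma[OF finK finS]) (simp add: split_def)
  also have "\<dots> = (\<Sum>k\<in>K. \<Sum>N\<in>base_seqs \<alpha> ((n - k) div q). P k * W N)"
    by (rule sum.cong[OF refl], rule sum.cong[OF refl])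
       (auto simp: J_def base_seqs_def intro!: W_shift)
  also have "\<dots> = (\<Sum>k\<in>K. P k * (\<Sum>N\<in>base_seqs \<alpha> ((n - k) div q). W N))"
    by (simp add: sum_distrib_left)
  finally show ?thesis unfolding W_def K_def .
qed

lemma BS_0: "base_seqs \<alpha> 0 = {\<lambda>_. 0}"
proof -
  have h: "N = (\<lambda>_. 0)" if "N \<in> base_seqs \<alpha> 0" for N
  proof -
    have fin: "finite {i. N i \<noteq> 0}" and s: "(\<Sum>i\<in>{i. N i \<noteq> 0}. (\<alpha> + 1) ^ i * N i) = 0"
      using that unfolding base_seqs_def by auto
    have z: "\<forall>i\<in>{i. N i \<noteq> 0}. (\<alpha> + 1) ^ i * N i = 0" using sum_eq_0_iff[OF fin, of "\<lambda>i. (\<alpha> + 1) ^ i * N i"] s by blast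
    show ?thesis
    proof (rule ext)
      fix i show "N i = 0"
      proof (rule ccontr)
        assume ni: "N i \<noteq> 0"
        then have "(\<alpha> + 1) ^ i * N i = 0" using z by simp
        then show False using ni by simp
      qed
    qed
  qed
  have mem: "(\<lambda>_. 0) \<in> base_seqs \<alpha> 0" unfolding base_seqs_def by simp
  show ?thesis
  proof (intro equalityI subsetI)
    fix N assume "N \<in> base_seqs \<alpha> 0"
    then show "N \<in> {\<lambda>_. 0}" using h by simp
  next
    fix N :: "nat \<Rightarrow> nat" assume "N \<in> {\<lambda>_. 0}"
    then show "N \<in> base_seqs \<alpha> 0" using mem by simp
  qed
qed

theorem mainTheorem2:
  fixes \<psi> :: "nat \<Rightarrow> nat" and \<alpha> n :: nat and A :: "nat set"
  assumes "inj_on \<psi> {1..}"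
    and "\<psi> ` {1..} \<subseteq> {1..}"
    and "A = \<psi> ` {1..}"
    and "\<alpha> \<ge> 1"
  shows "partA A n =
    (\<Sum>N\<in>base_seqs \<alpha> n. \<Prod>j\<in>{j. N j \<noteq> 0}. partA_bounded A \<alpha> (N j))"
proof -
  have A0: "0 \<notin> A" using assms(2,3) by auto
  define q where "q = Suc \<alpha>"
  define P where "P = partA_bounded A \<alpha>"
  have PSB: "P k = card (SB A \<alpha> k)" for k unfolding P_def partA_bounded_def SB_def by simp
  have FSA: "partA A k = card (SA A k)" for k unfolding partA_def SA_def by simp
  have P0: "P 0 = 1" using SB_0[OF A0] PSB by simp
  have q2: "q \<ge> 2" using assms(4) q_def by simp
  have "card (SA A n) = (\<Sum>N\<in>base_seqs \<alpha> n. \<Prod>j\<in>{j. N j \<noteq> 0}. P (N j))"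
  proof (induction n rule: less_induct)
    case (less n)
    show ?case
    proof (cases "n = 0")
      case True
      then show ?thesis using SA_0[OF A0] BS_0 by simp
    next
      case False
      have "card (SA A n) = (\<Sum>k\<in>{k. k \<le> n \<and> q dvd (n - k)}.
           card (SB A \<alpha> k) * card (SA A ((n - k) div q)))"
        by (rule recF[OF A0 q_def])
      also have "\<dots> = (\<Sum>k\<in>{k. k \<le> n \<and> q dvd (n - k)}. P k *
          (\<Sum>N\<in>base_seqs \<alpha> ((n - k) div q). \<Prod>j\<in>{j. N j \<noteq> 0}. P (N j)))"
      proof (rule sum.cong[OF refl])
        fix k assume "k \<in> {k. k \<le> n \<and> q dvd (n - k)}"
        have "(n - k) div q < n"
        proof (cases "k = 0")
          case True
          then show ?thesis using False q2 by simp
        next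
          case False
          have "(n - k) div q \<le> n - k" by simp
          then show ?thesis using False \<open>n \<noteq> 0\<close> by linarith
        qed
        then show "card (SB A \<alpha> k) * card (SA A ((n - k) div q)) = P k *
          (\<Sum>N\<in>base_seqs \<alpha> ((n - k) div q). \<Prod>j\<in>{j. N j \<noteq> 0}. P (N j))"
          using less PSB by simp
      qed
      also have "\<dots> = (\<Sum>N\<in>base_seqs \<alpha> n. \<Prod>j\<in>{j. N j \<noteq> 0}. P (N j))"
        by (rule recG[of P q \<alpha> n, OF P0 q_def assms(4), symmetric])
      finally show ?thesis .
    qed
  qed
  then show ?thesis using FSA P_def by simp
qed

end
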